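(* Let $\mathbb F$ be a field, $d\ge1$, $\psi\in\mathbb F^d$, $j\ge 1$ an integer, $\mathcal B\subseteq[d]$ with $|\mathcal B|\le j-1$, $m=j-|\mathcal B|-1$, and $x\in[d]$. Let $\sigma_P\in\mathbb Z^d$ and let $\mathbf P$ be an arbitrary matrix over $\mathbb F$ with rows indexed by $[d]$ and columns indexed by $j$-subsets of $[d]$. Define $\sigma_Q\in\mathbb Z^d$ by $\sigma_Q(i)=1+\sigma_P(i)+\mathrm{ind}_{\mathcal B\cup\{i\}}(i)$. Let $\mathbf Q$ be a $(d;m)$ signed determinant message matrix with signature $\sigma_Q$, let $\mathbf\Delta$ be the injection matrix defined below, and $\bar{\mathbf Q}=\mathbf Q+\mathbf\Delta$. Then for every $m$-subset $\mathcal I\subseteq[d]$, $$\sum_{y=1}^d\psi_y\bar{\mathbf Q}_{y,\mathcal I}=\sum_{i\in\mathcal I}(-1)^{\sigma_Q(i)+\mathrm{ind}_{\mathcal I}(i)}\big[\bar{\mathbf Q}\,\Xi^{(m)}_{\sigma_Q,\psi}\big]_{i,\mathcal I\setminus\{i\}}-\mathbb 1\{\mathcal I\cap\mathcal B=\varnothing\}\,\big[\mathbf P\,\Xi^{(j)}_{\sigma_P,\psi}\big]_{x,\mathcal I\cup\mathcal B}.$$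
   Context: Notation: $[d]=\{1,\dots,d\}$; $\mathrm{ind}_{\mathcal I}(x)=|\{y\in\mathcal I:y\le x\}|$; $\max\varnothing=-\infty$. $(d;m)$ signed determinant message matrix with signature $\sigma$: choose values $v_{x,\mathcal X}\in\mathbb F$ for every $m$-subset $\mathcal X\subseteq[d]$ and $x\in\mathcal X$, and $w_{y,\mathcal Y}\in\mathbb F$ for every $(m+1)$-subset $\mathcal Y\subseteq[d]$ and $y\in\mathcal Y$, satisfying $\sum_{y\in\mathcal Y}(-1)^{\mathrm{ind}_{\mathcal Y}(y)}w_{y,\mathcal Y}=0$ for every such $\mathcal Y$. The matrix has rows $x\in[d]$, columns $m$-subsets $\mathcal I\subseteq[d]$, entries $(-1)^{\sigma(x)}v_{x,\mathcal I}$ if $x\in\mathcal I$ and $(-1)^{\sigma(x)}w_{x,\mathcal I\cup\{x\}}$ if $x\notin\mathcal I$ (for $m=0$ it is the all-zero $d\times1$ matrix with column $\varnothing$). Repair-encoder matrix $\Xi^{(m)}_{\sigma,\psi}$: rows $m$-subsets $\mathcal I$, columns $(m-1)$-subsets $\mathcal J$ of $[d]$, entry $(-1)^{\sigma(y)+\mathrm{ind}_{\mathcal I}(y)}\psi_y$ if $\mathcal J\subseteq\mathcal I$, $\mathcal I\setminus\mathcal J=\{y\}$, and $0$ otherwise (for $m=0$ it has no columns). Injection matrix $\mathbf\Delta$: rows $i\in[d]$, columns $m$-subsets $\mathcal I\subseteq[d]$, with $\mathbf\Delta_{i,\mathcal I}=(-1)^{1+\sigma_P(i)+\mathrm{ind}_{\mathcal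 I\cup\{i\}\cup\mathcal B}(i)}\,\mathbf P_{x,\mathcal I\cup\{i\}\cup\mathcal B}$ if $i>\max\mathcal I$, $i\notin\mathcal B$ and $\mathcal I\cap\mathcal B=\varnothing$, and $\mathbf\Delta_{i,\mathcal I}=0$ otherwise. *)

theory Defs
  imports Main
begin

definition ksubsets :: "nat \<Rightarrow> nat \<Rightarrow> nat set set" where
  "ksubsets d k = {I. I \<subseteq> {1..d} \<and> card I = k}"

definition ind :: "nat set \<Rightarrow> nat \<Rightarrow> nat" where
  "ind I x = card {y \<in> I. y \<le> x}"

definition signpow :: "int \<Rightarrow> 'a::field" where
  "signpow k = (if even k then 1 else -1)"

(* Matrices: rows indexed by elements of [d] (or by subsets), columns by subsets.
   Product of A (columns indexed by k-subsets of [d]) with M (rows indexed by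
   k-subsets of [d]). *)
definition matmul_sub :: "nat \<Rightarrow> nat \<Rightarrow> ('r \<Rightarrow> nat set \<Rightarrow> 'a::field)
     \<Rightarrow> (nat set \<Rightarrow> 'c \<Rightarrow> 'a) \<Rightarrow> 'r \<Rightarrow> 'c \<Rightarrow> 'a" where
  "matmul_sub d k A M r c = (\<Sum>K\<in>ksubsets d k. A r K * M K c)"

definition sdmm :: "nat \<Rightarrow> nat \<Rightarrow> (nat \<Rightarrow> int) \<Rightarrow> (nat \<Rightarrow> nat set \<Rightarrow> 'a::field) \<Rightarrow> bool" where
  "sdmm d m \<sigma> Q \<longleftrightarrow>
     (\<exists>v w :: nat \<Rightarrow> nat set \<Rightarrow> 'a.
        (\<forall>Y\<in>ksubsets d (m+1). (\<Sum>y\<in>Y. signpow (int (ind Y y)) * w y Y) = 0) \<and>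
        (\<forall>x\<in>{1..d}. \<forall>I\<in>ksubsets d m.
           Q x I = (if x \<in> I then signpow (\<sigma> x) * v x I
                    else signpow (\<sigma> x) * w x (I \<union> {x}))))"

(* Repair-encoder matrix Xi^{(m)}_{sigma,psi}: entry at row I (m-subset), column J
   ((m-1)-subset); the row/column ranges are imposed by matmul_sub and by the
   column indices at which it is evaluated. *)
definition repair_enc :: "(nat \<Rightarrow> int) \<Rightarrow> (nat \<Rightarrow> 'a::field) \<Rightarrow> nat set \<Rightarrow> nat set \<Rightarrow> 'a" where
  "repair_enc \<sigma> \<psi> I J =
     (if J \<subseteq> I \<and> card (I - J) = 1
      then (let y = the_elem (I - J) in signpow (\<sigma> y + int (ind I y)) * \<psi> y)
      else 0)"

(* Injection matrix Delta (rows i, columns m-subsets I); "i > max I" with max {} = -infinity *)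
definition injection :: "(nat \<Rightarrow> int) \<Rightarrow> (nat \<Rightarrow> nat set \<Rightarrow> 'a::field) \<Rightarrow> nat \<Rightarrow> nat set
     \<Rightarrow> nat \<Rightarrow> nat set \<Rightarrow> 'a" where
  "injection \<sigma>P P x B i I =
     (if (\<forall>a\<in>I. a < i) \<and> i \<notin> B \<and> I \<inter> B = {}
      then signpow (1 + \<sigma>P i + int (ind (I \<union> {i} \<union> B) i)) * P x (I \<union> {i} \<union> B)
      else 0)"

end

theory Submission imports Defs begin

lemma signpow_add: "(signpow (a + b) :: 'a::field) = signpow a * signpow b"
  unfolding signpow_def by auto

lemma signpow_sq: "(signpow a :: 'a::field) * signpow a = 1"
  unfolding signpow_def by auto

lemma signpow_even: "even (a - b) \<Longrightarrow> (signpow a :: 'a::field) = signpow b"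
  unfolding signpow_def by (auto simp: even_diff)

lemma signpow_odd: "odd (a - b) \<Longrightarrow> (signpow a :: 'a::field) = - signpow b"
  unfolding signpow_def by (auto simp: even_diff)

lemma ind_insert: "finite A \<Longrightarrow> y \<notin> A \<Longrightarrow> ind (insert y A) z = ind A z + (if y \<le> z then 1 else 0)"
proof -
  assume "finite A" "y \<notin> A"
  show ?thesis
  proof (cases "y \<le> z")
    case True
    then have "{u \<in> insert y A. u \<le> z} = insert y {u\<in>A. u \<le> z}" by auto
    then show ?thesis using True \<open>finite A\<close> \<open>y \<notin> A\<close> unfolding ind_def by simp
  next
    case False
    then have "{u \<in> insert y A. u \<le> z} = {u\<in>A. u \<le> z}" by auto
    then show ?thesis using False unfolding ind_def by simp
  qed
qed

lemma ind_Un: "finite A \<Longrightarrow> finite C \<Longrightarrow> A \<inter> C = {} \<Longrightarrow> ind (A \<union> C) z = ind A z + ind C z"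
proof -
  assume a: "finite A" "finite C" "A \<inter> C = {}"
  have "{u \<in> A \<union> C. u \<le> z} = {u\<in>A. u \<le> z} \<union> {u\<in>C. u \<le> z}" by auto
  moreover have "card ({u\<in>A. u \<le> z} \<union> {u\<in>C. u \<le> z}) = card {u\<in>A. u \<le> z} + card {u\<in>C. u \<le> z}"
    by (rule card_Un_disjoint) (use a in auto)
  ultimately show ?thesis unfolding ind_def by simp
qed

lemma ind_all: "finite A \<Longrightarrow> \<forall>a\<in>A. a \<le> z \<Longrightarrow> ind A z = card A"
  unfolding ind_def by (metis (no_types, lifting) Collect_cong Collect_mem_eq)

lemma matmul_expand:
  assumes J: "J \<subseteq> {1..d}" and k: "card J + 1 = k"
  shows "matmul_sub d k F (repair_enc \<sigma> \<psi>) r J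
    = (\<Sum>y\<in>{1..d}-J. F r (insert y J) * (signpow (\<sigma> y + int (ind (insert y J) y)) * \<psi> y))"
proof -
  have finJ: "finite J" using J finite_subset by blast
  let ?S = "(\<lambda>y. insert y J) ` ({1..d}-J)"
  have S: "?S \<subseteq> ksubsets d k" using J k finJ by (auto simp: ksubsets_def)
  have z: "F r K * repair_enc \<sigma> \<psi> K J = 0" if "K \<in> ksubsets d k - ?S" for K
  proof (rule ccontr)
    assume "F r K * repair_enc \<sigma> \<psi> K J \<noteq> 0"
    then have c: "J \<subseteq> K" "card (K - J) = 1" unfolding repair_enc_def by (auto split: if_splits)
    then obtain y where y: "K - J = {y}" by (meson card_1_singletonE)
    then have "K = insert y J" using c by auto
    moreover have "y \<in> {1..d} - J" using y that by (auto simp: ksubsets_def)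
    ultimately show False using that by auto
  qed
  have "matmul_sub d k F (repair_enc \<sigma> \<psi>) r J = (\<Sum>K\<in>?S. F r K * repair_enc \<sigma> \<psi> K J)"
    unfolding matmul_sub_def
  proof (rule sum.mono_neutral_right)
    show "finite (ksubsets d k)" unfolding ksubsets_def
      by (rule finite_subset[of _ "Pow {1..d}"]) auto
  qed (use S z in auto)
  also have "\<dots> = (\<Sum>y\<in>{1..d}-J. F r (insert y J) * repair_enc \<sigma> \<psi> (insert y J) J)"
    by (rule sum.reindex_cong[where l="\<lambda>y. insert y J"]) (auto simp: inj_on_def)
  also have "\<dots> = (\<Sum>y\<in>{1..d}-J. F r (insert y J) * (signpow (\<sigma> y + int (ind (insert y J) y)) * \<psi> y))"
  proof (rule sum.cong)
    fix y assume "y \<in> {1..d} - J"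
    then have "insert y J - J = {y}" by auto
    then show "F r (insert y J) * repair_enc \<sigma> \<psi> (insert y J) J = F r (insert y J) * (signpow (\<sigma> y + int (ind (insert y J) y)) * \<psi> y)"
      unfolding repair_enc_def by (simp add: subset_insertI)
  qed simp
  finally show ?thesis .
qed

theorem proposition4:
  fixes d j m x :: nat
    and \<psi> :: "nat \<Rightarrow> 'a::field"
    and B :: "nat set"
    and \<sigma>P \<sigma>Q :: "nat \<Rightarrow> int"
    and P Q Qbar :: "nat \<Rightarrow> nat set \<Rightarrow> 'a"
  assumes "d \<ge> 1" and "j \<ge> 1"
    and "B \<subseteq> {1..d}" and "card B \<le> j - 1"
    and "m = j - card B - 1"
    and "x \<in> {1..d}"
    and "\<And>i. \<sigma>Q i = 1 + \<sigma>P i + int (ind (B \<union> {i}) i)"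
    and "sdmm d m \<sigma>Q Q"
    and "Qbar = (\<lambda>i I. Q i I + injection \<sigma>P P x B i I)"
  shows "\<forall>I\<in>ksubsets d m.
    (\<Sum>y=1..d. \<psi> y * Qbar y I) =
      (\<Sum>i\<in>I. signpow (\<sigma>Q i + int (ind I i)) *
                 matmul_sub d m Qbar (repair_enc \<sigma>Q \<psi>) i (I - {i}))
      - (if I \<inter> B = {} then matmul_sub d j P (repair_enc \<sigma>P \<psi>) x (I \<union> B) else 0)"
proof
  fix I assume I: "I \<in> ksubsets d m"
  have Isub: "I \<subseteq> {1..d}" and cardI: "card I = m" using I by (auto simp: ksubsets_def)
  have finI: "finite I" using Isub finite_subset by blast
  have finB: "finite B" using assms(3) finite_subset by blast
  from assms(8) obtain v w :: "nat \<Rightarrow> nat set \<Rightarrow> 'a" where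
    wrel: "\<forall>Y\<in>ksubsets d (m+1). (\<Sum>y\<in>Y. signpow (int (ind Y y)) * w y Y) = 0" and
    Qdef: "\<forall>x\<in>{1..d}. \<forall>I\<in>ksubsets d m.
           Q x I = (if x \<in> I then signpow (\<sigma>Q x) * v x I
                    else signpow (\<sigma>Q x) * w x (I \<union> {x}))"
    unfolding sdmm_def by blast
  define D where "D = injection \<sigma>P P x B"
  have Qbar: "\<And>i I. Qbar i I = Q i I + D i I" using assms(9) D_def by simp
  define sg where "sg i = (signpow (\<sigma>Q i + int (ind I i)) :: 'a)" for i
  define c where "c i y = (signpow (\<sigma>Q y + int (ind (insert y (I-{i})) y)) :: 'a) * \<psi> y" for i y
  define Off where "Off F = (\<Sum>i\<in>I. \<Sum>y\<in>{1..d}-I. sg i * (F i (insert y (I-{i})) * c i y))"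
    for F :: "nat \<Rightarrow> nat set \<Rightarrow> 'a"
  have Kin: "insert y (I - {i}) \<in> ksubsets d m" if "i \<in> I" "y \<in> {1..d} - I" for i y
  proof -
    have "card (insert y (I - {i})) = card (I - {i}) + 1" using finI that by simp
    also have "\<dots> = card I" using finI that
      by (metis One_nat_def Suc_pred add.right_neutral add_Suc_right card_Diff_singleton card_gt_0_iff empty_iff)
    finally show ?thesis using Isub that cardI by (auto simp: ksubsets_def)
  qed
  have Texp: "(\<Sum>i\<in>I. signpow (\<sigma>Q i + int (ind I i)) * matmul_sub d m F (repair_enc \<sigma>Q \<psi>) i (I - {i}))
      = (\<Sum>i\<in>I. \<psi> i * F i I) + Off F" for F
  proof -
    have "signpow (\<sigma>Q i + int (ind I i)) * matmul_sub d m F (repair_enc \<sigma>Q \<psi>) i (I - {i})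
        = \<psi> i * F i I + (\<Sum>y\<in>{1..d}-I. sg i * (F i (insert y (I-{i})) * c i y))" if i: "i \<in> I" for i
    proof -
      have J: "I - {i} \<subseteq> {1..d}" "card (I-{i}) + 1 = m" using Isub finI i cardI
        by (auto simp: card_gt_0_iff) (metis Suc_pred card_gt_0_iff emptyE)
      have "matmul_sub d m F (repair_enc \<sigma>Q \<psi>) i (I - {i})
          = (\<Sum>y\<in>{1..d}-(I-{i}). F i (insert y (I-{i})) * c i y)"
        unfolding c_def by (rule matmul_expand[OF J])
      also have "{1..d}-(I-{i}) = insert i ({1..d}-I)" using i Isub by auto
      also have "(\<Sum>y\<in>insert i ({1..d}-I). F i (insert y (I-{i})) * c i y)
          = F i (insert i (I-{i})) * c i i + (\<Sum>y\<in>{1..d}-I. F i (insert y (I-{i})) * c i y)"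
        by (rule sum.insert) (use i in auto)
      also have "insert i (I-{i}) = I" using i by auto
      also have "c i i = sg i * \<psi> i" unfolding c_def sg_def using i by (simp add: insert_absorb)
      finally have eq: "matmul_sub d m F (repair_enc \<sigma>Q \<psi>) i (I - {i}) = F i I * (sg i * \<psi> i) + (\<Sum>y\<in>{1..d}-I. F i (insert y (I-{i})) * c i y)" .
      have sq: "sg i * sg i = 1" unfolding sg_def by (rule signpow_sq)
      have "sg i * (F i I * (sg i * \<psi> i)) = (sg i * sg i) * (\<psi> i * F i I)" by (simp add: ac_simps)
      then have e2: "sg i * (F i I * (sg i * \<psi> i)) = \<psi> i * F i I" using sq by simp
      show ?thesis unfolding sg_def[symmetric] eq distrib_left e2 sum_distrib_left by simp
    qed
    then have "(\<Sum>i\<in>I. signpow (\<sigma>Q i + int (ind I i)) * matmul_sub d m F (repair_enc \<sigma>Q \<psi>) i (I - {i}))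
      = (\<Sum>i\<in>I. \<psi> i * F i I + (\<Sum>y\<in>{1..d}-I. sg i * (F i (insert y (I-{i})) * c i y)))"
      by (rule sum.cong[OF refl])
    then show ?thesis unfolding Off_def by (simp add: sum.distrib)
  qed
  show "(\<Sum>y=1..d. \<psi> y * Qbar y I) =
      (\<Sum>i\<in>I. signpow (\<sigma>Q i + int (ind I i)) *
                 matmul_sub d m Qbar (repair_enc \<sigma>Q \<psi>) i (I - {i}))
      - (if I \<inter> B = {} then matmul_sub d j P (repair_enc \<sigma>P \<psi>) x (I \<union> B) else 0)"
  proof -
  have OffQD: "Off Qbar = Off Q + Off D" unfolding Off_def Qbar
    by (simp add: distrib_left distrib_right sum.distrib)
  have Lsplit: "(\<Sum>y=1..d. \<psi> y * Qbar y I) = (\<Sum>i\<in>I. \<psi> i * Qbar i I) + (\<Sum>y\<in>{1..d}-I. \<psi> y * Q y I) + (\<Sum>y\<in>{1..d}-I. \<psi> y * D y I)"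
  proof -
    have "(\<Sum>y=1..d. \<psi> y * Qbar y I) = (\<Sum>y\<in>{1..d}-I. \<psi> y * Qbar y I) + (\<Sum>y\<in>I. \<psi> y * Qbar y I)"
      by (rule sum.subset_diff[OF Isub]) simp
    then show ?thesis unfolding Qbar by (simp add: distrib_left sum.distrib)
  qed
  have claimQ: "(\<Sum>y\<in>{1..d}-I. \<psi> y * Q y I) = Off Q"
  proof -
    have "Off Q = (\<Sum>y\<in>{1..d}-I. \<Sum>i\<in>I. sg i * (Q i (insert y (I-{i})) * c i y))"
      unfolding Off_def by (rule sum.swap)
    also have "\<dots> = (\<Sum>y\<in>{1..d}-I. \<psi> y * Q y I)"
    proof (rule sum.cong[OF refl])
      fix y assume y: "y \<in> {1..d}-I"
      define Y where "Y = insert y I"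
      have yI: "y \<notin> I" using y by simp
      have Yin: "Y \<in> ksubsets d (m+1)" using y Isub finI cardI by (auto simp: Y_def ksubsets_def)
      have rel: "signpow (int (ind Y y)) * w y Y + (\<Sum>i\<in>I. signpow (int (ind Y i)) * w i Y) = 0"
      proof -
        have "(\<Sum>z\<in>Y. signpow (int (ind Y z)) * w z Y) = 0" using wrel Yin by blast
        then show ?thesis unfolding Y_def by (simp add: sum.insert[OF finI yI])
      qed
      have Qy: "Q y I = signpow (\<sigma>Q y) * w y Y"
      proof -
        have "Q y I = (if y \<in> I then signpow (\<sigma>Q y) * v y I else signpow (\<sigma>Q y) * w y (I \<union> {y}))"
          using Qdef y I by blast
        then show ?thesis using yI unfolding Y_def by simp
      qed
      have Qi: "Q i (insert y (I-{i})) = signpow (\<sigma>Q i) * w i Y" if i: "i \<in> I" for i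
      proof -
        have "i \<noteq> y" using i yI by auto
        moreover have "insert y (I - {i}) \<union> {i} = Y" using i unfolding Y_def by auto
        moreover have "Q i (insert y (I-{i})) = (if i \<in> insert y (I-{i}) then signpow (\<sigma>Q i) * v i (insert y (I-{i})) else signpow (\<sigma>Q i) * w i (insert y (I-{i}) \<union> {i}))"
          using Qdef Kin[OF i y] i Isub by blast
        ultimately show ?thesis by simp
      qed
      have coef: "sg i * (signpow (\<sigma>Q i) * signpow (\<sigma>Q y + int (ind (insert y (I-{i})) y)))
          = - ((signpow (\<sigma>Q y) * signpow (int (ind Y y))) * signpow (int (ind Y i)))" if i: "i \<in> I" for i
      proof -
        have ne: "i \<noteq> y" using i yI by auto
        have fin': "finite (I - {i})" using finI by simp
        have f1: "ind (insert y (I-{i})) y = ind (I-{i}) y + 1" using ind_insert[OF fin', of y y] yI by simp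
        have f2: "ind I y = ind (I-{i}) y + (if i \<le> y then 1 else 0)"
          using ind_insert[OF fin', of i y] i by (simp add: insert_absorb)
        have f3: "ind Y y = ind I y + 1" using ind_insert[OF finI yI, of y] Y_def by simp
        have f4: "ind Y i = ind I i + (if y \<le> i then 1 else 0)" using ind_insert[OF finI yI, of i] Y_def by simp
        have par: "odd ((\<sigma>Q i + int (ind I i) + (\<sigma>Q i + (\<sigma>Q y + int (ind (insert y (I-{i})) y))))
              - (\<sigma>Q y + int (ind Y y) + int (ind Y i)))"
        proof -
          have "(\<sigma>Q i + int (ind I i) + (\<sigma>Q i + (\<sigma>Q y + int (ind (insert y (I-{i})) y))))
              - (\<sigma>Q y + int (ind Y y) + int (ind Y i)) = 2 * \<sigma>Q i - 1"
            using ne unfolding f1 f3 f4 f2 by (cases "i < y") auto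
          then show ?thesis by presburger
        qed
        show ?thesis unfolding sg_def signpow_add[symmetric] using signpow_odd[OF par] by simp
      qed
      have "(\<Sum>i\<in>I. sg i * (Q i (insert y (I-{i})) * c i y))
          = (\<Sum>i\<in>I. - (signpow (\<sigma>Q y) * signpow (int (ind Y y)) * \<psi> y) * (signpow (int (ind Y i)) * w i Y))"
      proof (rule sum.cong[OF refl])
        fix i assume i: "i \<in> I"
        have "sg i * (Q i (insert y (I-{i})) * c i y)
           = (sg i * (signpow (\<sigma>Q i) * signpow (\<sigma>Q y + int (ind (insert y (I-{i})) y)))) * (\<psi> y * w i Y)"
          by (simp add: Qi[OF i] c_def ac_simps)
        also have "\<dots> = - (signpow (\<sigma>Q y) * signpow (int (ind Y y)) * \<psi> y) * (signpow (int (ind Y i)) * w i Y)"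
          unfolding coef[OF i] by (simp add: ac_simps)
        finally show "sg i * (Q i (insert y (I-{i})) * c i y) = - (signpow (\<sigma>Q y) * signpow (int (ind Y y)) * \<psi> y) * (signpow (int (ind Y i)) * w i Y)" .
      qed
      also have "\<dots> = - (signpow (\<sigma>Q y) * signpow (int (ind Y y)) * \<psi> y) * (\<Sum>i\<in>I. signpow (int (ind Y i)) * w i Y)"
        by (simp add: sum_distrib_left)
      also have "(\<Sum>i\<in>I. signpow (int (ind Y i)) * w i Y) = - (signpow (int (ind Y y)) * w y Y)"
        using rel by (simp add: eq_neg_iff_add_eq_0 add.commute)
      also have "- (signpow (\<sigma>Q y) * signpow (int (ind Y y)) * \<psi> y) * - (signpow (int (ind Y y)) * w y Y)
          = (signpow (int (ind Y y)) * signpow (int (ind Y y))) * (\<psi> y * (signpow (\<sigma>Q y) * w y Y))"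
        by (simp add: ac_simps)
      also have "\<dots> = \<psi> y * Q y I" by (simp add: signpow_sq Qy)
      finally show "(\<Sum>i\<in>I. sg i * (Q i (insert y (I-{i})) * c i y)) = \<psi> y * Q y I" .
    qed
    finally show ?thesis by simp
  qed
  have Dnz: "y < i \<and> y \<notin> B \<and> I \<inter> B = {} \<and> (\<forall>a\<in>I. a \<le> i)"
    if i: "i \<in> I" and y: "y \<in> {1..d} - I" and nz: "D i (insert y (I-{i})) \<noteq> 0" for i y
  proof -
    have c: "(\<forall>a\<in>insert y (I-{i}). a < i) \<and> i \<notin> B \<and> insert y (I-{i}) \<inter> B = {}"
      using nz unfolding D_def injection_def by (auto split: if_splits)
    then have "y < i" "y \<notin> B" by auto
    moreover have "I \<inter> B = {}" using c i by blast
    moreover have "\<forall>a\<in>I. a \<le> i" using c by (metis Diff_iff insertCI less_imp_le_nat order_refl singletonD)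
    ultimately show ?thesis by blast
  qed
  have DyI0: "(\<forall>a\<in>I. a < y) \<and> y \<notin> B \<and> I \<inter> B = {}" if nz: "D y I \<noteq> 0" for y
    using nz unfolding D_def injection_def by (auto split: if_splits)
  have claimD: "(\<Sum>y\<in>{1..d}-I. \<psi> y * D y I) = Off D - (if I \<inter> B = {} then matmul_sub d j P (repair_enc \<sigma>P \<psi>) x (I \<union> B) else 0)"
  proof (cases "I \<inter> B = {}")
    case False
    have "(\<Sum>y\<in>{1..d}-I. \<psi> y * D y I) = 0"
      by (rule sum.neutral) (use DyI0 False in force)
    moreover have "Off D = 0" unfolding Off_def
    proof (rule sum.neutral, rule ballI, rule sum.neutral, rule ballI)
      fix i y assume iy: "i \<in> I" "y \<in> {1..d}-I"
      then have "D i (insert y (I-{i})) = 0" using Dnz False by blast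
      then show "sg i * (D i (insert y (I-{i})) * c i y) = 0" by simp
    qed
    ultimately show ?thesis using False by simp
  next
    case True
    define Z where "Z y = insert y (I \<union> B)" for y
    have IB: "I \<union> B \<subseteq> {1..d}" "card (I \<union> B) + 1 = j"
      using Isub assms(3) apply blast
      using card_Un_disjoint[OF finI finB True] cardI assms(2,4,5) by simp
    have PX: "matmul_sub d j P (repair_enc \<sigma>P \<psi>) x (I \<union> B)
        = (\<Sum>y\<in>{1..d}-(I \<union> B). P x (Z y) * (signpow (\<sigma>P y + int (ind (Z y) y)) * \<psi> y))"
      unfolding Z_def by (rule matmul_expand[OF IB])
    have L1: "(\<Sum>y\<in>{1..d}-I. \<psi> y * D y I) = (\<Sum>y\<in>{1..d}-(I \<union> B). \<psi> y * D y I)"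
      by (rule sum.mono_neutral_right) (use DyI0 in auto)
    have "Off D = (\<Sum>y\<in>{1..d}-I. \<Sum>i\<in>I. sg i * (D i (insert y (I-{i})) * c i y))"
      unfolding Off_def by (rule sum.swap)
    also have "\<dots> = (\<Sum>y\<in>{1..d}-(I \<union> B). \<Sum>i\<in>I. sg i * (D i (insert y (I-{i})) * c i y))"
    proof (rule sum.mono_neutral_right)
      show "\<forall>y\<in>{1..d} - I - ({1..d} - (I \<union> B)). (\<Sum>i\<in>I. sg i * (D i (insert y (I - {i})) * c i y)) = 0"
      proof
        fix y assume y: "y \<in> {1..d} - I - ({1..d} - (I \<union> B))"
        then have "y \<in> B" "y \<in> {1..d} - I" by auto
        then show "(\<Sum>i\<in>I. sg i * (D i (insert y (I - {i})) * c i y)) = 0"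
        proof (intro sum.neutral ballI)
          fix i assume "i \<in> I"
          then have "D i (insert y (I-{i})) = 0" using Dnz \<open>y \<in> B\<close> \<open>y \<in> {1..d} - I\<close> by blast
          then show "sg i * (D i (insert y (I-{i})) * c i y) = 0" by simp
        qed
      qed
    qed auto
    finally have OffD: "Off D = \<dots>" .
    have per: "\<psi> y * D y I = (\<Sum>i\<in>I. sg i * (D i (insert y (I-{i})) * c i y))
        - P x (Z y) * (signpow (\<sigma>P y + int (ind (Z y) y)) * \<psi> y)"
      if y: "y \<in> {1..d} - (I \<union> B)" for y
    proof -
      have yI: "y \<in> {1..d} - I" and yB: "y \<notin> B" using y by auto
      have ZU: "I \<union> {y} \<union> B = Z y" unfolding Z_def by auto
      show ?thesis
      proof (cases "\<forall>a\<in>I. a < y")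
        case True
        have DyI: "D y I = signpow (1 + \<sigma>P y + int (ind (Z y) y)) * P x (Z y)"
          using True yB \<open>I \<inter> B = {}\<close> unfolding D_def injection_def ZU by simp
        have S0: "(\<Sum>i\<in>I. sg i * (D i (insert y (I-{i})) * c i y)) = 0"
          by (rule sum.neutral) (use Dnz yI True in fastforce)
        have sgn: "(signpow (1 + \<sigma>P y + int (ind (Z y) y)) :: 'a) = - signpow (\<sigma>P y + int (ind (Z y) y))"
          by (rule signpow_odd) simp
        show ?thesis unfolding DyI S0 sgn by (simp add: ac_simps)
      next
        case False
        then obtain a where a: "a \<in> I" "y \<le> a" by auto
        have Ine: "I \<noteq> {}" using a by auto
        define i0 where "i0 = Max I"
        have i0I: "i0 \<in> I" unfolding i0_def using Max_in[OF finI Ine] .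
        have i0max: "\<forall>b\<in>I. b \<le> i0" unfolding i0_def using Max_ge[OF finI] by blast
        have yi0: "y < i0"
        proof -
          have "a \<le> i0" using i0max a by blast
          moreover have "y \<noteq> a" using a yI by auto
          ultimately show ?thesis using a by arith
        qed
        have DyI: "D y I = 0" using DyI0 False by blast
        have Soth: "(\<Sum>i\<in>I - {i0}. sg i * (D i (insert y (I-{i})) * c i y)) = 0"
        proof (rule sum.neutral, rule ballI)
          fix i assume i: "i \<in> I - {i0}"
          have "i < i0" using i i0max by (metis DiffE le_neq_implies_less singletonI)
          then have "D i (insert y (I-{i})) = 0" using Dnz[of i y] i yI i0I by fastforce
          then show "sg i * (D i (insert y (I-{i})) * c i y) = 0" by simp
        qed
        define K where "K = insert y (I - {i0})"
        have KU: "K \<union> {i0} \<union> B = Z y" unfolding K_def Z_def using i0I by auto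
        have cond: "(\<forall>b\<in>K. b < i0) \<and> i0 \<notin> B \<and> K \<inter> B = {}"
          unfolding K_def using yi0 i0max i0I yB \<open>I \<inter> B = {}\<close>
        proof (intro conjI ballI)
          fix b assume "b \<in> insert y (I - {i0})"
          then show "b < i0"
          proof
            assume "b = y" then show ?thesis using yi0 by simp
          next
            assume "b \<in> I - {i0}" then show ?thesis using i0max by (metis DiffE le_neq_implies_less singletonI)
          qed
        qed (use i0I yB \<open>I \<inter> B = {}\<close> in auto)
        have Di0: "D i0 K = signpow (1 + \<sigma>P i0 + int (ind (Z y) i0)) * P x (Z y)"
          using cond unfolding D_def injection_def KU by simp
        have S: "(\<Sum>i\<in>I. sg i * (D i (insert y (I-{i})) * c i y)) = sg i0 * (D i0 K * c i0 y)"
          using sum.remove[OF finI i0I, of "\<lambda>i. sg i * (D i (insert y (I-{i})) * c i y)"] Soth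
          unfolding K_def by simp
        have fin': "finite (I - {i0})" using finI by simp
        have yn: "y \<notin> I - {i0}" using yI by auto
        have g1: "ind I i0 = m" using ind_all[OF finI i0max] cardI by simp
        have g2: "ind (B \<union> {i0}) i0 = ind B i0 + 1"
          using ind_insert[OF finB, of i0 i0] cond by simp
        have g3: "ind (B \<union> {y}) y = ind B y + 1"
          using ind_insert[OF finB yB, of y] by simp
        have g4a: "ind K y = ind (I-{i0}) y + 1" unfolding K_def using ind_insert[OF fin' yn, of y] by simp
        have g4b: "ind I y = ind (I-{i0}) y"
          using ind_insert[OF fin', of i0 y] i0I yi0 by (simp add: insert_absorb)
        have yIB: "y \<notin> I \<union> B" using yI yB by auto
        have finIB: "finite (I \<union> B)" using finI finB by simp
        have g5: "ind (Z y) i0 = m + ind B i0 + 1"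
          unfolding Z_def using ind_insert[OF finIB yIB, of i0] ind_Un[OF finI finB True, of i0] g1 yi0 by simp
        have g6: "ind (Z y) y = ind I y + ind B y + 1"
          unfolding Z_def using ind_insert[OF finIB yIB, of y] ind_Un[OF finI finB True, of y] by simp
        have par: "even ((\<sigma>Q i0 + int (ind I i0) + (1 + \<sigma>P i0 + int (ind (Z y) i0) + (\<sigma>Q y + int (ind K y))))
              - (\<sigma>P y + int (ind (Z y) y)))"
        proof -
          have "(\<sigma>Q i0 + int (ind I i0) + (1 + \<sigma>P i0 + int (ind (Z y) i0) + (\<sigma>Q y + int (ind K y))))
              - (\<sigma>P y + int (ind (Z y) y)) = 2 * (\<sigma>P i0 + int (ind B i0) + int m + 3)"
            unfolding assms(7)[of i0] assms(7)[of y] g1 g2 g3 g4a g5 g6 g4b by simp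
          then show ?thesis by presburger
        qed
        have sgn: "sg i0 * (signpow (1 + \<sigma>P i0 + int (ind (Z y) i0)) * signpow (\<sigma>Q y + int (ind K y)))
            = (signpow (\<sigma>P y + int (ind (Z y) y)) :: 'a)"
          unfolding sg_def signpow_add[symmetric] using signpow_even[OF par] by simp
        have "sg i0 * (D i0 K * c i0 y) = (sg i0 * (signpow (1 + \<sigma>P i0 + int (ind (Z y) i0)) * signpow (\<sigma>Q y + int (ind K y)))) * (P x (Z y) * \<psi> y)"
          using Di0 unfolding c_def K_def[symmetric] by (simp add: ac_simps)
        also have "\<dots> = P x (Z y) * (signpow (\<sigma>P y + int (ind (Z y) y)) * \<psi> y)"
          unfolding sgn by (simp add: ac_simps)
        finally show ?thesis unfolding S DyI by simp
      qed
    qed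
    have "(\<Sum>y\<in>{1..d}-(I \<union> B). \<psi> y * D y I)
        = (\<Sum>y\<in>{1..d}-(I \<union> B). (\<Sum>i\<in>I. sg i * (D i (insert y (I-{i})) * c i y))
            - P x (Z y) * (signpow (\<sigma>P y + int (ind (Z y) y)) * \<psi> y))"
      by (rule sum.cong[OF refl]) (rule per)
    also have "\<dots> = Off D - matmul_sub d j P (repair_enc \<sigma>P \<psi>) x (I \<union> B)"
      unfolding OffD PX by (rule sum_subtractf)
    finally show ?thesis using L1 True by simp
  qed
  define X where "X = (if I \<inter> B = {} then matmul_sub d j P (repair_enc \<sigma>P \<psi>) x (I \<union> B) else 0)"
  have "(\<Sum>y=1..d. \<psi> y * Qbar y I) = (\<Sum>i\<in>I. \<psi> i * Qbar i I) + Off Q + (Off D - X)"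
    unfolding Lsplit claimQ claimD X_def ..
  also have "\<dots> = ((\<Sum>i\<in>I. \<psi> i * Qbar i I) + Off Qbar) - X" unfolding OffQD by (simp add: algebra_simps)
  also have "\<dots> = (\<Sum>i\<in>I. signpow (\<sigma>Q i + int (ind I i)) * matmul_sub d m Qbar (repair_enc \<sigma>Q \<psi>) i (I - {i})) - X"
    unfolding Texp ..
  finally show ?thesis unfolding X_def .
  qed
qed

end
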